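(* Let $m\ge 3$, $H=B(l_1,\ldots,l_m)$ with $l_1\le l_2\le 2$, and $G=H^2$. Then $G$ is equitably $(m+1)$-choosable.
   Context: All graphs are finite and simple. For $m,l_1,\ldots,l_m\in\mathbb{N}$ with $l_1\le\cdots\le l_m$, $B(l_1,\ldots,l_m)$ is the graph with vertex set $\{u\}\cup\{v_{i,j}: i\in[m], j\in[l_i]\}$ in which, for each $i\in[m]$, consecutive vertices in the sequence $u, v_{i,1},\ldots,v_{i,l_i}$ are adjacent (and there are no other edges). For a graph $H$, $H^2$ has vertex set $V(H)$ with two vertices adjacent iff their distance in $H$ is 1 or 2. A $k$-assignment $L$ assigns to each vertex a set of exactly $k$ colors; an equitable $L$-coloring of $G$ is a proper coloring $f$ with $f(v)\in L(v)$ such that no color is used more than $\lceil |V(G)|/k\rceil$ times; $G$ is equitably $k$-choosable if it has an equitable $L$-coloring for every $k$-assignment $L$. *)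

theory Defs
  imports Complex_Main
begin

text \<open>Graphs are given by a finite vertex set V and a symmetric irreflexive
adjacency relation E (only meaningful on V).\<close>

definition graph_square :: "'a set \<Rightarrow> ('a \<Rightarrow> 'a \<Rightarrow> bool) \<Rightarrow> 'a \<Rightarrow> 'a \<Rightarrow> bool" where
  "graph_square V E x y \<longleftrightarrow> x \<in> V \<and> y \<in> V \<and> x \<noteq> y \<and>
     (E x y \<or> (\<exists>z\<in>V. E x z \<and> E z y))"

definition k_assignment :: "'a set \<Rightarrow> ('a \<Rightarrow> nat set) \<Rightarrow> nat \<Rightarrow> bool" where
  "k_assignment V L k \<longleftrightarrow> (\<forall>v\<in>V. finite (L v) \<and> card (L v) = k)"

definition equitable_L_coloring ::
    "'a set \<Rightarrow> ('a \<Rightarrow> 'a \<Rightarrow> bool) \<Rightarrow> ('a \<Rightarrow> nat set) \<Rightarrow> nat \<Rightarrow> ('a \<Rightarrow> nat) \<Rightarrow> bool" where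
  "equitable_L_coloring V E L k f \<longleftrightarrow>
     (\<forall>v\<in>V. f v \<in> L v) \<and>
     (\<forall>u\<in>V. \<forall>v\<in>V. E u v \<longrightarrow> f u \<noteq> f v) \<and>
     (\<forall>c. card {v\<in>V. f v = c} \<le> nat \<lceil>real (card V) / real k\<rceil>)"

definition equitably_choosable :: "'a set \<Rightarrow> ('a \<Rightarrow> 'a \<Rightarrow> bool) \<Rightarrow> nat \<Rightarrow> bool" where
  "equitably_choosable V E k \<longleftrightarrow>
     (\<forall>L. k_assignment V L k \<longrightarrow> (\<exists>f. equitable_L_coloring V E L k f))"

text \<open>The spider graph B(l_1,...,l_m): centre u = (0,0), v_{i,j} = (i,j)
for 1 \<le> i \<le> m, 1 \<le> j \<le> l i.\<close>

definition spider_V :: "nat \<Rightarrow> (nat \<Rightarrow> nat) \<Rightarrow> (nat \<times> nat) set" where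
  "spider_V m l = {(0,0)} \<union> {(i,j). 1 \<le> i \<and> i \<le> m \<and> 1 \<le> j \<and> j \<le> l i}"

definition spider_arc :: "nat \<Rightarrow> (nat \<Rightarrow> nat) \<Rightarrow> nat \<times> nat \<Rightarrow> nat \<times> nat \<Rightarrow> bool" where
  "spider_arc m l x y \<longleftrightarrow>
     (\<exists>i. 1 \<le> i \<and> i \<le> m \<and> 1 \<le> l i \<and> x = (0,0) \<and> y = (i,1)) \<or>
     (\<exists>i j. 1 \<le> i \<and> i \<le> m \<and> 1 \<le> j \<and> j + 1 \<le> l i \<and> x = (i,j) \<and> y = (i,j+1))"

definition spider_E :: "nat \<Rightarrow> (nat \<Rightarrow> nat) \<Rightarrow> nat \<times> nat \<Rightarrow> nat \<times> nat \<Rightarrow> bool" where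
  "spider_E m l x y \<longleftrightarrow> spider_arc m l x y \<or> spider_arc m l y x"

end

theory Submission
  imports Defs
begin


lemma greedy_rank:
  fixes E :: "'a \<Rightarrow> 'a \<Rightarrow> bool" and L :: "'a \<Rightarrow> nat set" and r :: "'a \<Rightarrow> nat"
  assumes "bij_betw r V {0..<n}"
    and "\<forall>x\<in>V. \<forall>y\<in>V. E x y \<longrightarrow> r x \<le> r y + m \<and> r y \<le> r x + m"
    and "\<forall>v\<in>V. finite (L v) \<and> card (L v) = Suc m"
    and "\<forall>x\<in>V. \<not> E x x"
  shows "\<exists>f. (\<forall>v\<in>V. f v \<in> L v) \<and> (\<forall>x\<in>V. \<forall>y\<in>V. E x y \<longrightarrow> f x \<noteq> f y) \<and>
             (\<forall>x\<in>V. \<forall>y\<in>V. x \<noteq> y \<and> r x div Suc m = r y div Suc m \<longrightarrow> f x \<noteq> f y)"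
  using assms
proof (induction n arbitrary: V)
  case 0
  then have "V = {}" by (simp add: bij_betw_def)
  then show ?case by simp
next
  case (Suc n)
  have "n \<in> r ` V" using Suc.prems(1) by (simp add: bij_betw_def)
  then obtain x where xV: "x \<in> V" and rx: "r x = n" by blast
  define V' where "V' = V - {x}"
  have bij': "bij_betw r V' {0..<n}"
  proof -
    have "bij_betw r (V - {x}) ({0..<Suc n} - {n})"
      using Suc.prems(1) xV rx by (intro bij_betw_DiffI) (auto simp: bij_betw_def)
    moreover have "{0..<Suc n} - {n} = {0..<n}" by auto
    ultimately show ?thesis by (simp add: V'_def)
  qed
  have finV: "finite V" using Suc.prems(1) bij_betw_finite by blast
  obtain f' where f'1: "\<forall>v\<in>V'. f' v \<in> L v" and f'2: "\<forall>x\<in>V'. \<forall>y\<in>V'. E x y \<longrightarrow> f' x \<noteq> f' y"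
     and f'3: "\<forall>x\<in>V'. \<forall>y\<in>V'. x \<noteq> y \<and> r x div Suc m = r y div Suc m \<longrightarrow> f' x \<noteq> f' y"
    using Suc.IH[OF bij'] Suc.prems(2,3,4) by (auto simp: V'_def)
  define F where "F = {w \<in> V'. E x w \<or> E w x \<or> r w div Suc m = r x div Suc m}"
  have rlt: "\<And>w. w \<in> V' \<Longrightarrow> r w < n" using bij' by (auto simp: bij_betw_def)
  have Fsub: "r ` F \<subseteq> {n - m..<n}"
  proof
    fix t assume "t \<in> r ` F"
    then obtain w where wF: "w \<in> F" and t: "t = r w" by blast
    have wV': "w \<in> V'" using wF by (simp add: F_def)
    have "n \<le> r w + m"
    proof -
      consider "E x w" | "E w x" | "r w div Suc m = r x div Suc m" using wF by (auto simp: F_def)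
      then show ?thesis
      proof cases
        case 1 then show ?thesis using Suc.prems(2) xV wV' rx by (auto simp: V'_def)
      next
        case 2 then show ?thesis using Suc.prems(2) xV wV' rx by (auto simp: V'_def)
      next
        case 3
        have a: "r w div Suc m * Suc m \<le> r w" by (metis div_mult_mod_eq le_add1)
        have b: "n = n div Suc m * Suc m + n mod Suc m" by (metis div_mult_mod_eq)
        have c: "n mod Suc m \<le> m" using mod_less_divisor[of "Suc m" n] by simp
        have d: "n div Suc m * Suc m \<le> r w" using a 3 rx by simp
        show ?thesis using d b c by linarith
      qed
    qed
    then show "t \<in> {n - m..<n}" using rlt[OF wV'] t by auto
  qed
  have finF: "finite F" using finV by (auto simp: F_def V'_def)
  have injF: "inj_on r F" using bij' by (auto simp: F_def bij_betw_def inj_on_def)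
  have "card F \<le> m"
  proof -
    have "card F = card (r ` F)" using injF by (simp add: card_image)
    also have "\<dots> \<le> card {n - m..<n}" using Fsub by (intro card_mono) auto
    also have "\<dots> \<le> m" by simp
    finally show ?thesis .
  qed
  then have cf: "card (f' ` F) \<le> m" using card_image_le[OF finF, of f'] by linarith
  have "\<not> L x \<subseteq> f' ` F"
  proof
    assume "L x \<subseteq> f' ` F"
    then have "card (L x) \<le> card (f' ` F)" using finF by (intro card_mono) auto
    then show False using cf Suc.prems(3) xV by auto
  qed
  then obtain c where cL: "c \<in> L x" and cF: "c \<notin> f' ` F" by blast
  define f where "f = f'(x := c)"
  have "\<forall>v\<in>V. f v \<in> L v" using f'1 cL by (auto simp: f_def V'_def)
  moreover have "\<forall>y\<in>V. \<forall>z\<in>V. E y z \<longrightarrow> f y \<noteq> f z"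
  proof (intro ballI impI)
    fix y z assume yV: "y \<in> V" and zV: "z \<in> V" and E: "E y z"
    show "f y \<noteq> f z"
    proof (cases "y = x")
      case True
      show ?thesis
      proof (cases "z = x")
        case True
        then show ?thesis using E \<open>y = x\<close> Suc.prems(4) xV by auto
      next
        case False
        then have "z \<in> F" using zV E \<open>y = x\<close> by (auto simp: F_def V'_def)
        then show ?thesis using cF False True by (auto simp: f_def)
      qed
    next
      case False
      show ?thesis
      proof (cases "z = x")
        case True
        then have "y \<in> F" using yV E False by (auto simp: F_def V'_def)
        then show ?thesis using cF False True by (force simp: f_def)
      next
        case False
        then show ?thesis using f'2 yV zV E \<open>y \<noteq> x\<close> by (auto simp: f_def V'_def)
      qed
    qed
  qed
  moreover have "\<forall>y\<in>V. \<forall>z\<in>V. y \<noteq> z \<and> r y div Suc m = r z div Suc m \<longrightarrow> f y \<noteq> f z"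
  proof (intro ballI impI)
    fix y z assume yV: "y \<in> V" and zV: "z \<in> V" and H: "y \<noteq> z \<and> r y div Suc m = r z div Suc m"
    show "f y \<noteq> f z"
    proof (cases "y = x")
      case True
      then have "z \<in> F" using zV H by (auto simp: F_def V'_def)
      then show ?thesis using cF True H by (auto simp: f_def)
    next
      case False
      show ?thesis
      proof (cases "z = x")
        case True
        then have "y \<in> F" using yV H False by (auto simp: F_def V'_def)
        then show ?thesis using cF False True by (force simp: f_def)
      next
        case False
        then show ?thesis using f'3 yV zV H \<open>y \<noteq> x\<close> by (auto simp: f_def V'_def)
      qed
    qed
  qed
  ultimately show ?case by blast
qed

lemma ceil_bound:
  fixes N k :: nat
  assumes "k > 0" "N \<ge> 1"
  shows "(N - 1) div k + 1 \<le> nat \<lceil>real N / real k\<rceil>"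
proof -
  define q where "q = (N - 1) div k"
  have "q * k \<le> N - 1" unfolding q_def by (metis div_mult_mod_eq le_add1)
  then have "q * k < N" using assms by linarith
  then have "real (q * k) < real N" by (simp only: of_nat_less_iff)
  then have "real q * real k < real N" by simp
  then have "real q < real N / real k" using assms by (simp add: pos_less_divide_eq)
  then have "int (q + 1) \<le> \<lceil>real N / real k\<rceil>" by (simp add: le_ceiling_iff)
  then show ?thesis by (simp add: q_def)
qed

lemma greedy_pos:
  fixes pos :: "'a \<Rightarrow> int" and E :: "'a \<Rightarrow> 'a \<Rightarrow> bool"
  assumes finV: "finite V" and inj: "inj_on pos V"
    and bw: "\<forall>x\<in>V. \<forall>y\<in>V. E x y \<longrightarrow> \<bar>pos x - pos y\<bar> \<le> int m"
    and irr: "\<forall>x\<in>V. \<not> E x x"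
  shows "equitably_choosable V E (Suc m)"
proof -
  define r where "r v = card {w\<in>V. pos w < pos v}" for v
  have mono: "r x < r y" if "x \<in> V" "y \<in> V" "pos x < pos y" for x y
  proof -
    have "{w\<in>V. pos w < pos x} \<subset> {w\<in>V. pos w < pos y}" using that by auto
    then show ?thesis unfolding r_def using finV by (intro psubset_card_mono) auto
  qed
  have injr: "inj_on r V"
  proof (rule inj_onI)
    fix x y assume "x \<in> V" "y \<in> V" "r x = r y"
    then show "x = y" using mono inj by (metis inj_onD less_irrefl linorder_neqE)
  qed
  have rlt: "r v < card V" if "v \<in> V" for v
  proof -
    have "{w\<in>V. pos w < pos v} \<subset> V" using that by auto
    then show ?thesis unfolding r_def using finV by (intro psubset_card_mono) auto
  qed
  have bij: "bij_betw r V {0..<card V}"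
  proof (rule bij_betw_imageI[OF injr])
    have "r ` V \<subseteq> {0..<card V}" using rlt by auto
    moreover have "card (r ` V) = card {0..<card V}" using injr by (simp add: card_image)
    ultimately show "r ` V = {0..<card V}" by (intro card_subset_eq) auto
  qed
  have diff: "r x \<le> r y + nat (pos x - pos y)" if "x \<in> V" "y \<in> V" "pos y \<le> pos x" for x y
  proof -
    have "{w\<in>V. pos w < pos x} \<subseteq> {w\<in>V. pos w < pos y} \<union> {w\<in>V. pos y \<le> pos w \<and> pos w < pos x}"
      by auto
    then have "r x \<le> card ({w\<in>V. pos w < pos y} \<union> {w\<in>V. pos y \<le> pos w \<and> pos w < pos x})"
      unfolding r_def using finV by (intro card_mono) auto
    also have "\<dots> \<le> r y + card {w\<in>V. pos y \<le> pos w \<and> pos w < pos x}"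
      unfolding r_def by (rule card_Un_le)
    also have "card {w\<in>V. pos y \<le> pos w \<and> pos w < pos x} = card (pos ` {w\<in>V. pos y \<le> pos w \<and> pos w < pos x})"
      using inj by (intro card_image[symmetric]) (auto simp: inj_on_def)
    also have "\<dots> \<le> card {pos y..<pos x}" by (intro card_mono) auto
    finally show ?thesis by simp
  qed
  have bwr: "\<forall>x\<in>V. \<forall>y\<in>V. E x y \<longrightarrow> r x \<le> r y + m \<and> r y \<le> r x + m"
  proof (intro ballI impI)
    fix x y assume xV: "x \<in> V" and yV: "y \<in> V" and "E x y"
    then have d: "\<bar>pos x - pos y\<bar> \<le> int m" using bw by blast
    show "r x \<le> r y + m \<and> r y \<le> r x + m"
    proof (cases "pos y \<le> pos x")
      case True
      have "r y \<le> r x" using mono xV yV True by (metis order.order_iff_strict less_imp_le inj inj_onD)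
      moreover have "r x \<le> r y + nat (pos x - pos y)" using diff xV yV True by blast
      ultimately show ?thesis using d True by linarith
    next
      case False
      have "r x \<le> r y" using mono xV yV False by (meson less_imp_le not_le)
      moreover have "r y \<le> r x + nat (pos y - pos x)" using diff xV yV False by auto
      ultimately show ?thesis using d False by linarith
    qed
  qed
  show ?thesis unfolding equitably_choosable_def
  proof (intro allI impI)
    fix L assume "k_assignment V L (Suc m)"
    then have Lk: "\<forall>v\<in>V. finite (L v) \<and> card (L v) = Suc m" by (simp add: k_assignment_def)
    obtain f where f1: "\<forall>v\<in>V. f v \<in> L v" and f2: "\<forall>x\<in>V. \<forall>y\<in>V. E x y \<longrightarrow> f x \<noteq> f y"
      and f3: "\<forall>x\<in>V. \<forall>y\<in>V. x \<noteq> y \<and> r x div Suc m = r y div Suc m \<longrightarrow> f x \<noteq> f y"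
      using greedy_rank[OF bij bwr Lk] irr by blast
    have "card {v\<in>V. f v = c} \<le> nat \<lceil>real (card V) / real (Suc m)\<rceil>" for c
    proof (cases "{v\<in>V. f v = c} = {}")
      case True then show ?thesis by (simp only: True card.empty)
    next
      case False
      then have N1: "card V \<ge> 1" using finV by (metis (no_types, lifting) Collect_empty_eq One_nat_def Suc_leI card_gt_0_iff empty_iff)
      have "inj_on (\<lambda>v. r v div Suc m) {v\<in>V. f v = c}" using f3 unfolding inj_on_def by (metis (mono_tags, lifting) mem_Collect_eq)
      then have "card {v\<in>V. f v = c} = card ((\<lambda>v. r v div Suc m) ` {v\<in>V. f v = c})" by (simp add: card_image)
      also have "\<dots> \<le> card {0..(card V - 1) div Suc m}"
      proof (intro card_mono)
        show "(\<lambda>v. r v div Suc m) ` {v \<in> V. f v = c} \<subseteq> {0..(card V - 1) div Suc m}"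
          using rlt by (auto intro!: div_le_mono) (metis Suc_pred less_Suc_eq_le gr_implies_not0 not_gr0)
      qed auto
      also have "\<dots> = (card V - 1) div Suc m + 1" by simp
      also have "\<dots> \<le> nat \<lceil>real (card V) / real (Suc m)\<rceil>" using ceil_bound[OF _ N1, of "Suc m"] by (simp only: zero_less_Suc simp_thms)
      finally show ?thesis .
    qed
    then have "equitable_L_coloring V E L (Suc m) f" using f1 f2 by (simp add: equitable_L_coloring_def)
    then show "\<exists>f. equitable_L_coloring V E L (Suc m) f" by blast
  qed
qed



definition bb :: "nat \<Rightarrow> nat" where "bb m = (m - 1) div 2"
definition aa :: "nat \<Rightarrow> nat" where "aa m = m - 2 - bb m"

definition lvl :: "nat \<Rightarrow> nat \<Rightarrow> nat \<Rightarrow> nat \<Rightarrow> int" where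
  "lvl m s r j = (if j = 1 then 2 + int r else if j = 2 then int s + 2 + int r
                  else int m + 1 + int (j - 3) * int s + int r)"

definition spos :: "nat \<Rightarrow> nat \<times> nat \<Rightarrow> int" where
  "spos m x = (case x of (i, j) \<Rightarrow>
     if i = 0 then 0
     else if i = 1 then (if j = 1 then -1 else - int m)
     else if i = 2 then (if j = 1 then 1 else if even m then int m else - (int m - 1))
     else if i \<le> bb m + 2 then lvl m (bb m) (i - 3) j
     else - lvl m (aa m) (i - bb m - 3) j)"

lemma ab_facts:
  assumes "m \<ge> 3"
  shows "aa m + bb m + 2 = m" "2 * bb m + 1 \<le> m" "2 * aa m + 2 \<le> m" "1 \<le> bb m"
    "even m \<Longrightarrow> 2 * bb m + 2 = m" "odd m \<Longrightarrow> 2 * aa m + 3 = m"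
proof -
  have e: "m - 1 = 2 * bb m + (m - 1) mod 2" unfolding bb_def by simp
  have f: "(m - 1) mod 2 < 2" by simp
  have ev: "(m - 1) mod 2 = 1" if "even m"
    using that assms by presburger
  have od: "(m - 1) mod 2 = 0" if "odd m"
    using that assms by presburger
  show "aa m + bb m + 2 = m" "2 * bb m + 1 \<le> m" "2 * aa m + 2 \<le> m" "1 \<le> bb m"
    using e f assms unfolding aa_def by linarith+
  show "2 * bb m + 2 = m" if "even m" using e ev[OF that] assms by linarith
  show "2 * aa m + 3 = m" if "odd m" using e od[OF that] assms unfolding aa_def by linarith
qed

lemma jcases:
  assumes "(j::nat) \<ge> 1"
  obtains "j = 1" | "j = 2" | t where "j = t + 3"
proof -
  consider "j = 1" | "j = 2" | "j \<ge> 3" using assms by linarith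
  then show thesis
  proof cases
    case 3 then have "j = (j - 3) + 3" by simp
    then show ?thesis using that(3) by blast
  qed (use that in blast)+
qed

lemma lvl_props:
  assumes "r < s" "2 * s + 1 \<le> m" "j \<ge> 1"
  shows "2 \<le> lvl m s r j"
    and "lvl m s r j \<le> 2 * int s + 1 \<or> int m + 1 \<le> lvl m s r j"
    and "\<bar>lvl m s r (j + 1) - lvl m s r j\<bar> \<le> int m"
    and "\<bar>lvl m s r (j + 2) - lvl m s r j\<bar> \<le> int m"
proof -
  have A: "2 \<le> lvl m s r j \<and> (lvl m s r j \<le> 2 * int s + 1 \<or> int m + 1 \<le> lvl m s r j) \<and>
    \<bar>lvl m s r (j + 1) - lvl m s r j\<bar> \<le> int m \<and> \<bar>lvl m s r (j + 2) - lvl m s r j\<bar> \<le> int m"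
    using assms(3)
  proof (cases rule: jcases)
    case 1 then show ?thesis using assms(1,2) by (simp add: lvl_def)
  next
    case 2 then show ?thesis using assms(1,2) by (simp add: lvl_def)
  next
    case (3 t)
    have e1: "j + 1 = (t + 1) + 3" "j + 2 = (t + 2) + 3" using 3 by simp_all
    have l0: "lvl m s r j = int m + 1 + int t * int s + int r" using 3 by (simp add: lvl_def)
    have l1: "lvl m s r (j + 1) = int m + 1 + int t * int s + int s + int r"
      unfolding e1 by (simp add: lvl_def algebra_simps)
    have l2: "lvl m s r (j + 2) = int m + 1 + int t * int s + 2 * int s + int r"
      unfolding e1 by (simp add: lvl_def algebra_simps)
    have nn: "0 \<le> int t * int s" by simp
    show ?thesis unfolding l0 l1 l2 using assms(1,2) nn by linarith
  qed
  then show "2 \<le> lvl m s r j" "lvl m s r j \<le> 2 * int s + 1 \<or> int m + 1 \<le> lvl m s r j"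
    "\<bar>lvl m s r (j + 1) - lvl m s r j\<bar> \<le> int m" "\<bar>lvl m s r (j + 2) - lvl m s r j\<bar> \<le> int m"
    by blast+
qed

lemma lvl1: "lvl m s r 1 = 2 + int r" by (simp add: lvl_def)

lemma divmod_uniq:
  fixes a a' s r r' :: nat
  assumes "a * s + r = a' * s + r'" "r < s" "r' < s"
  shows "a = a' \<and> r = r'"
proof -
  have s0: "s > 0" using assms by auto
  have "a = (a * s + r) div s" using s0 assms(2) by simp
  also have "\<dots> = (a' * s + r') div s" using assms(1) by simp
  also have "\<dots> = a'" using s0 assms(3) by simp
  finally have 1: "a = a'" .
  have "r = (a * s + r) mod s" using s0 assms(2) by simp
  also have "\<dots> = (a' * s + r') mod s" using assms(1) by simp
  also have "\<dots> = r'" using s0 assms(3) by simp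
  finally show ?thesis using 1 by simp
qed

lemma lvl_inj:
  assumes "r < s" "r' < s" "2 * s + 1 \<le> m" "j \<ge> 1" "j' \<ge> 1" "lvl m s r j = lvl m s r' j'"
  shows "r = r' \<and> j = j'"
proof -
  have lo: "lvl m s q k \<le> 2 * int s + 1" if "k = 1 \<or> k = 2" "q < s" for q k
    using that by (auto simp: lvl_def)
  have hi: "int m + 1 \<le> lvl m s q (t + 3)" for q t
    by (simp add: lvl_def)
  show ?thesis using assms(4)
  proof (cases rule: jcases)
    case 1
    show ?thesis using assms(5)
    proof (cases rule: jcases)
      case (3 t)
      have "lvl m s r j \<le> 2 * int s + 1" using lo[where q=r and k=j] 1 assms(1) by blast
      then show ?thesis using hi[where q=r' and t=t] 3 assms(3,6) by simp
    qed (use 1 assms in \<open>auto simp: lvl_def\<close>)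
  next
    case 2
    show ?thesis using assms(5)
    proof (cases rule: jcases)
      case (3 t)
      have "lvl m s r j \<le> 2 * int s + 1" using lo[where q=r and k=j] 2 assms(1) by blast
      then show ?thesis using hi[where q=r' and t=t] 3 assms(3,6) by simp
    qed (use 2 assms in \<open>auto simp: lvl_def\<close>)
  next
    case (3 t)
    show ?thesis using assms(5)
    proof (cases rule: jcases)
      case 1
      have "lvl m s r' j' \<le> 2 * int s + 1" using lo[where q=r' and k=j'] 1 assms(2) by blast
      then show ?thesis using hi[where q=r and t=t] 3 assms(3,6) by simp
    next
      case 2
      have "lvl m s r' j' \<le> 2 * int s + 1" using lo[where q=r' and k=j'] 2 assms(2) by blast
      then show ?thesis using hi[where q=r and t=t] 3 assms(3,6) by simp
    next
      case (3 t')
      then have "int (t * s + r) = int (t' * s + r')" using assms(6) \<open>j = t + 3\<close> by (simp add: lvl_def)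
      then have "t * s + r = t' * s + r'" by linarith
      then show ?thesis using divmod_uniq[OF _ assms(1,2)] 3 \<open>j = t + 3\<close> by blast
    qed
  qed
qed

lemma spos_R: "3 \<le> i \<Longrightarrow> i \<le> bb m + 2 \<Longrightarrow> spos m (i, j) = lvl m (bb m) (i - 3) j"
  by (simp add: spos_def)
lemma spos_L: "bb m + 2 < i \<Longrightarrow> spos m (i, j) = - lvl m (aa m) (i - bb m - 3) j"
  by (simp add: spos_def)
lemma spos_0: "spos m (0, j) = 0" by (simp add: spos_def)
lemma spos_1: "spos m (1, 1) = -1" "spos m (1, 2) = - int m" by (simp_all add: spos_def)
lemma spos_2: "spos m (2, 1) = 1" "spos m (2, 2) = (if even m then int m else - (int m - 1))"
  by (simp_all add: spos_def)

lemma legcases: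
  assumes "m \<ge> 3" "1 \<le> i" "i \<le> m"
  obtains "i = 1" | "i = 2" | "3 \<le> i" "i \<le> bb m + 2" "i - 3 < bb m"
    | "bb m + 2 < i" "i - bb m - 3 < aa m"
proof -
  note F = ab_facts[OF assms(1)]
  consider "i = 1" | "i = 2" | "3 \<le> i" "i \<le> bb m + 2" | "bb m + 2 < i" using assms(2) by linarith
  then show thesis
  proof cases
    case 3 then show ?thesis using that(3) F by linarith
  next
    case 4 then show ?thesis using that(4) F assms(3) by linarith
  qed (use that in auto)
qed

lemma N1:
  assumes "m \<ge> 3" "1 \<le> i" "i \<le> m"
  shows "- (int (aa m) + 1) \<le> spos m (i, 1) \<and> spos m (i, 1) \<le> int (bb m) + 1"
  using assms(1,2,3)
proof (cases rule: legcases)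
  case 3 then show ?thesis by (simp add: spos_R lvl_def)
next
  case 4 then show ?thesis by (simp add: spos_L lvl_def)
qed (auto simp: spos_def)

lemma N2:
  assumes "m \<ge> 3" "1 \<le> i" "i \<le> m"
  shows "\<bar>spos m (i, 2)\<bar> \<le> int m"
  using assms(1,2,3)
proof (cases rule: legcases)
  case 3 then show ?thesis using ab_facts[OF assms(1)] by (simp add: spos_R lvl_def)
next
  case 4 then show ?thesis using ab_facts[OF assms(1)] by (simp add: spos_L lvl_def)
qed (use assms(1) in \<open>auto simp: spos_def\<close>)

lemma N3:
  assumes "m \<ge> 3" "1 \<le> i" "i \<le> m" "1 \<le> i'" "i' \<le> m"
  shows "\<bar>spos m (i, 1) - spos m (i', 1)\<bar> \<le> int m"
  using N1[OF assms(1,2,3)] N1[OF assms(1,4,5)] ab_facts(1)[OF assms(1)] by linarith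

lemma N4:
  assumes "m \<ge> 3" "1 \<le> i" "i \<le> m" "1 \<le> j" "j + 1 \<le> l i" "l 1 \<le> 2" "l 2 \<le> 2"
  shows "\<bar>spos m (i, j + 1) - spos m (i, j)\<bar> \<le> int m"
  using assms(1,2,3)
proof (cases rule: legcases)
  case 1 then have "j = 1" using assms by auto
  then show ?thesis using 1 assms(1) by (simp add: spos_def)
next
  case 2 then have "j = 1" using assms by auto
  then show ?thesis using 2 assms(1) by (simp add: spos_def)
next
  case 3 then show ?thesis using ab_facts[OF assms(1)] lvl_props(3)[of "i - 3" "bb m" m j] assms
    by (simp add: spos_R)
next
  case 4 then show ?thesis using ab_facts[OF assms(1)] lvl_props(3)[of "i - bb m - 3" "aa m" m j] assms
    by (simp add: spos_L)
qed

lemma N5: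
  assumes "m \<ge> 3" "1 \<le> i" "i \<le> m" "1 \<le> j" "j + 2 \<le> l i" "l 1 \<le> 2" "l 2 \<le> 2"
  shows "\<bar>spos m (i, j + 2) - spos m (i, j)\<bar> \<le> int m"
  using assms(1,2,3)
proof (cases rule: legcases)
  case 1 then show ?thesis using assms by auto
next
  case 2 then show ?thesis using assms by auto
next
  case 3 then show ?thesis using ab_facts[OF assms(1)] lvl_props(4)[of "i - 3" "bb m" m j] assms
    by (simp add: spos_R)
next
  case 4 then show ?thesis using ab_facts[OF assms(1)] lvl_props(4)[of "i - bb m - 3" "aa m" m j] assms
    by (simp add: spos_L)
qed

lemma arc_near:
  assumes "m \<ge> 3" "l 1 \<le> 2" "l 2 \<le> 2" "spider_arc m l x y"
  shows "\<bar>spos m x - spos m y\<bar> \<le> int m"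
  using assms(4) unfolding spider_arc_def
proof (elim disjE exE conjE)
  fix i assume "1 \<le> i" "i \<le> m" "x = (0, 0)" "y = (i, 1)"
  then have "\<bar>spos m (i, 1)\<bar> \<le> int m" using N1[OF assms(1), of i] ab_facts[OF assms(1)]
    unfolding abs_le_iff by linarith
  then show ?thesis using \<open>x = (0, 0)\<close> \<open>y = (i, 1)\<close> by (simp add: spos_0)
next
  fix i j assume "1 \<le> i" "i \<le> m" "1 \<le> j" "j + 1 \<le> l i" "x = (i, j)" "y = (i, j + 1)"
  then show ?thesis using N4[OF assms(1), of i j l] assms(2,3) by (simp add: abs_minus_commute)
qed

lemma arc2_near:
  assumes "m \<ge> 3" "l 1 \<le> 2" "l 2 \<le> 2" "spider_arc m l x z" "spider_arc m l z y"
  shows "\<bar>spos m x - spos m y\<bar> \<le> int m"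
  using assms(4,5) unfolding spider_arc_def
proof (elim disjE exE conjE)
  fix i i' j assume "1 \<le> i" "i \<le> m" "x = (0, 0)" "z = (i, 1)" "z = (i', j)" "y = (i', j + 1)"
  then show ?thesis using N2[OF assms(1), of i] by (simp add: spos_0 numeral_2_eq_2)
next
  fix i j j' i' assume "1 \<le> i" "i \<le> m" "1 \<le> j" "j + 1 \<le> l i" "x = (i, j)" "z = (i, j + 1)"
     "z = (i', j')" "y = (i', j' + 1)" "j' + 1 \<le> l i'"
  then show ?thesis using N5[OF assms(1), of i j l] assms(2,3) by (simp add: abs_minus_commute)
qed auto

lemma sib_near:
  assumes "m \<ge> 3" "spider_arc m l z x" "spider_arc m l z y"
  shows "\<bar>spos m x - spos m y\<bar> \<le> int m"
  using assms(2,3) unfolding spider_arc_def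
proof (elim disjE exE conjE)
  fix i i' assume "1 \<le> i" "i \<le> m" "1 \<le> i'" "i' \<le> m" "x = (i, 1)" "y = (i', 1)"
  then show ?thesis using N3[OF assms(1), of i i'] by simp
qed auto

lemma par_eq:
  assumes "spider_arc m l x z" "spider_arc m l y z"
  shows "x = y"
  using assms unfolding spider_arc_def by auto

lemma sq_near:
  assumes "m \<ge> 3" "l 1 \<le> 2" "l 2 \<le> 2"
    "graph_square (spider_V m l) (spider_E m l) x y"
  shows "\<bar>spos m x - spos m y\<bar> \<le> int m"
proof -
  have an: "\<bar>spos m a - spos m b\<bar> \<le> int m" if "spider_arc m l a b" for a b
    using arc_near[OF assms(1,2,3) that] .
  have an2: "\<bar>spos m a - spos m b\<bar> \<le> int m" if "spider_arc m l a c" "spider_arc m l c b" for a b c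
    using arc2_near[OF assms(1,2,3) that] .
  have sn: "\<bar>spos m a - spos m b\<bar> \<le> int m" if "spider_arc m l c a" "spider_arc m l c b" for a b c
    using sib_near[OF assms(1) that] .
  from assms(4) have "spider_E m l x y \<or> (\<exists>z. spider_E m l x z \<and> spider_E m l z y)"
    unfolding graph_square_def by blast
  then show ?thesis unfolding spider_E_def
  proof (elim disjE exE conjE)
    assume "spider_arc m l x y" then show ?thesis using an by blast
  next
    assume "spider_arc m l y x" then show ?thesis using an[of y x] by (simp add: abs_minus_commute)
  next
    fix z assume "spider_arc m l x z" "spider_arc m l z y" then show ?thesis using an2 by blast
  next
    fix z assume "spider_arc m l x z" "spider_arc m l y z" then show ?thesis using par_eq by fastforce
  next
    fix z assume "spider_arc m l z x" "spider_arc m l z y" then show ?thesis using sn by blast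
  next
    fix z assume "spider_arc m l z x" "spider_arc m l y z" then show ?thesis using an2[of y z x]
      by (simp add: abs_minus_commute)
  qed
qed



lemma vert_cases:
  fixes l :: "nat \<Rightarrow> nat" and j :: nat
  assumes "m \<ge> 3" "1 \<le> i" "i \<le> m" "1 \<le> j" "j \<le> l i" "l 1 \<le> 2" "l 2 \<le> 2"
  obtains "i = 1" "j = 1" | "i = 1" "j = 2" | "i = 2" "j = 1" | "i = 2" "j = 2"
    | "3 \<le> i" "i \<le> bb m + 2" "i - 3 < bb m"
    | "bb m + 2 < i" "i - bb m - 3 < aa m"
  using assms(1,2,3)
proof (cases rule: legcases)
  case 1
  then have "j = 1 \<or> j = 2" using assms(4,5,6) by auto
  then show ?thesis using 1 that(1,2) by blast
next
  case 2
  then have "j = 1 \<or> j = 2" using assms(4,5,7) by auto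
  then show ?thesis using 2 that(3,4) by blast
next
  case 3 then show ?thesis using that(5) by blast
next
  case 4 then show ?thesis using that(6) by blast
qed

lemma vval:
  fixes l :: "nat \<Rightarrow> nat" and j :: nat
  assumes m3: "m \<ge> 3" and "1 \<le> i" "i \<le> m" "1 \<le> j" "j \<le> l i" and l1: "l 1 \<le> 2" and l2: "l 2 \<le> 2"
  shows "(i = 1 \<and> j = 1 \<and> spos m (i, j) = -1) \<or> (i = 1 \<and> j = 2 \<and> spos m (i, j) = - int m) \<or>
    (i = 2 \<and> j = 1 \<and> spos m (i, j) = 1) \<or>
    (i = 2 \<and> j = 2 \<and> ((2 * bb m + 2 = m \<and> spos m (i, j) = int m) \<or> (2 * aa m + 3 = m \<and> spos m (i, j) = - (int m - 1)))) \<or>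
    (3 \<le> i \<and> i \<le> bb m + 2 \<and> spos m (i, j) = lvl m (bb m) (i - 3) j \<and> 2 \<le> spos m (i, j) \<and>
       (spos m (i, j) \<le> 2 * int (bb m) + 1 \<or> int m + 1 \<le> spos m (i, j))) \<or>
    (bb m + 2 < i \<and> spos m (i, j) = - lvl m (aa m) (i - bb m - 3) j \<and> spos m (i, j) \<le> -2 \<and>
       (- (2 * int (aa m) + 1) \<le> spos m (i, j) \<or> spos m (i, j) \<le> - (int m + 1)))"
  using m3 assms(2-5) l1 l2
proof (cases rule: vert_cases)
  case 1 then show ?thesis by (simp add: spos_def)
next
  case 2 then show ?thesis by (simp add: spos_def)
next
  case 3 then show ?thesis by (simp add: spos_def)
next
  case 4 then show ?thesis using ab_facts[OF m3] by (simp add: spos_def)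
next
  case 5
  have "2 * bb m + 1 \<le> m" using ab_facts[OF m3] by linarith
  note P = lvl_props(1,2)[OF 5(3) this assms(4)]
  have q: "spos m (i, j) = lvl m (bb m) (i - 3) j" using 5 by (simp add: spos_R)
  have "3 \<le> i \<and> i \<le> bb m + 2 \<and> spos m (i, j) = lvl m (bb m) (i - 3) j \<and> 2 \<le> spos m (i, j) \<and>
       (spos m (i, j) \<le> 2 * int (bb m) + 1 \<or> int m + 1 \<le> spos m (i, j))" using 5 P unfolding q by blast
  then show ?thesis by blast
next
  case 6
  have "2 * aa m + 1 \<le> m" using ab_facts[OF m3] by linarith
  note P = lvl_props(1,2)[OF 6(2) this assms(4)]
  have q: "spos m (i, j) = - lvl m (aa m) (i - bb m - 3) j" using 6 by (simp add: spos_L)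
  have "bb m + 2 < i \<and> spos m (i, j) = - lvl m (aa m) (i - bb m - 3) j \<and> spos m (i, j) \<le> -2 \<and>
       (- (2 * int (aa m) + 1) \<le> spos m (i, j) \<or> spos m (i, j) \<le> - (int m + 1))"
    using 6 P unfolding q by auto
  then show ?thesis by blast
qed

lemma pair_inj:
  fixes l :: "nat \<Rightarrow> nat" and j j' :: nat
  assumes m3: "m \<ge> 3" and l1: "l 1 \<le> 2" and l2: "l 2 \<le> 2"
    and x: "1 \<le> i" "i \<le> m" "1 \<le> j" "j \<le> l i"
    and y: "1 \<le> i'" "i' \<le> m" "1 \<le> j'" "j' \<le> l i'"
    and e: "spos m (i, j) = spos m (i', j')"
  shows "i = i' \<and> j = j'"
proof -
  note F = ab_facts[OF m3]
  have RR: "i = i' \<and> j = j'" if "3 \<le> i" "i \<le> bb m + 2" "3 \<le> i'" "i' \<le> bb m + 2"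
    "spos m (i, j) = lvl m (bb m) (i - 3) j" "spos m (i', j') = lvl m (bb m) (i' - 3) j'"
  proof -
    have "i - 3 = i' - 3 \<and> j = j'"
      using lvl_inj[of "i - 3" "bb m" "i' - 3" m j j'] that e x(3) y(3) F by linarith
    then show ?thesis using that by linarith
  qed
  have LL: "i = i' \<and> j = j'" if "bb m + 2 < i" "bb m + 2 < i'"
    "spos m (i, j) = - lvl m (aa m) (i - bb m - 3) j" "spos m (i', j') = - lvl m (aa m) (i' - bb m - 3) j'"
  proof -
    have "i - bb m - 3 = i' - bb m - 3 \<and> j = j'"
      using lvl_inj[of "i - bb m - 3" "aa m" "i' - bb m - 3" m j j'] that e x(2,3) y(2,3) F by linarith
    then show ?thesis using that by linarith
  qed
  show ?thesis
    using vval[OF m3 x l1 l2] vval[OF m3 y l1 l2] e F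
    apply (elim disjE conjE)
    apply (((simp; fail) | (rule RR; assumption) | (rule LL; assumption) | linarith)+)
    done
qed

lemma spos_inj:
  fixes l :: "nat \<Rightarrow> nat"
  assumes m3: "m \<ge> 3" and l1: "l 1 \<le> 2" and l2: "l 2 \<le> 2"
  shows "inj_on (spos m) (spider_V m l)"
proof (rule inj_onI)
  fix x y assume xV: "x \<in> spider_V m l" and yV: "y \<in> spider_V m l" and eq: "spos m x = spos m y"
  have nz: "spos m (i, j) \<noteq> 0" if "1 \<le> i" "i \<le> m" "1 \<le> j" "j \<le> l i" for i j
    using vval[OF m3 that l1 l2] m3 by auto
  show "x = y"
  proof (cases "x = (0, 0)")
    case True
    then show ?thesis using yV eq nz by (auto simp: spider_V_def spos_0)
  next
    case False
    then obtain i j where x: "x = (i, j)" "1 \<le> i" "i \<le> m" "1 \<le> j" "j \<le> l i"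
      using xV by (auto simp: spider_V_def)
    show ?thesis
    proof (cases "y = (0, 0)")
      case True
      then show ?thesis using x eq nz by (auto simp: spos_0)
    next
      case False
      then obtain i' j' where y: "y = (i', j')" "1 \<le> i'" "i' \<le> m" "1 \<le> j'" "j' \<le> l i'"
        using yV by (auto simp: spider_V_def)
      show ?thesis using pair_inj[OF m3 l1 l2 x(2-5) y(2-5)] eq x(1) y(1) by simp
    qed
  qed
qed


theorem lemma2p6:
  fixes m :: nat and l :: "nat \<Rightarrow> nat"
  assumes "m \<ge> 3"
    and "\<forall>i. 1 \<le> i \<and> i \<le> m \<longrightarrow> l i \<ge> 1"
    and "\<forall>i j. 1 \<le> i \<and> i \<le> j \<and> j \<le> m \<longrightarrow> l i \<le> l j"
    and "l 1 \<le> l 2" and "l 2 \<le> 2"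
  shows "equitably_choosable (spider_V m l)
           (graph_square (spider_V m l) (spider_E m l)) (m + 1)"
proof -
  have l1: "l 1 \<le> 2" using assms(4,5) by linarith
  have fin: "finite (spider_V m l)"
  proof (rule finite_subset)
    show "spider_V m l \<subseteq> insert (0, 0) (SIGMA i:{1..m}. {1..l i})"
      by (auto simp: spider_V_def)
  qed auto
  have "equitably_choosable (spider_V m l) (graph_square (spider_V m l) (spider_E m l)) (Suc m)"
  proof (rule greedy_pos[OF fin spos_inj[OF assms(1) l1 assms(5)]])
    show "\<forall>x\<in>spider_V m l. \<forall>y\<in>spider_V m l.
        graph_square (spider_V m l) (spider_E m l) x y \<longrightarrow> \<bar>spos m x - spos m y\<bar> \<le> int m"
      using sq_near[OF assms(1) l1 assms(5)] by blast
    show "\<forall>x\<in>spider_V m l. \<not> graph_square (spider_V m l) (spider_E m l) x x"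
      by (simp add: graph_square_def)
  qed
  then show ?thesis by simp
qed

end
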